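(* Let $\Gamma$ be a countable group, let $f$ be a strongly ergodic measure preserving action of $\Gamma$ on a standard Borel probability space $(X,\mu)$, and let $g$ be a measure preserving action of $\Gamma$ on a finite probability space $(Y,\nu)$ with $\nu(\{y\})>0$ for all $y\in Y$. If $f$ weakly contains $g$, then $g$ is a factor of $f$.
   Context: Actions are right actions, written $x\mapsto x\gamma$. For a measurable set $A$ and $\gamma\in\Gamma$, $A^\gamma$ denotes the image of $A$ under $\gamma$. Weak containment: an action $f$ of $\Gamma$ on $(X,\mu)$ weakly contains an action $g$ on $(Y,\nu)$ ($f\succeq g$) if for all measurable $A_1,\dots,A_n\subseteq Y$, all finite $F\subseteq\Gamma$ and all $\varepsilon>0$ there are measurable $B_1,\dots,B_n\subseteq X$ with $|\mu(B_i^\gamma\cap B_j)-\nu(A_i^\gamma\cap A_j)|<\varepsilon$ for all $1\le i,j\le n$, $\gamma\in F$. The action $g$ is a factor of $f$ if there is a $\Gamma$-equivariant measurable map $\Phi:X\to Y$ with $\Phi_*\mu=\nu$. A sequence of measurable sets $A_n\subseteq X$ is almost invariant if $\mu(A_n\setminus A_n\gamma)\to 0$ for every $\gamma\in\Gamma$, and trivial if $\mu(A_n)(1-\mu(A_n))\to0$. An action is strongly ergodic if it is ergodic and every almost invariant sequence is trivial. *)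

theory Defs
  imports "HOL-Probability.Probability" "HOL-Algebra.Group"
begin

definition right_action :: "('g, 'c) monoid_scheme \<Rightarrow> 'a set \<Rightarrow> ('a \<Rightarrow> 'g \<Rightarrow> 'a) \<Rightarrow> bool" where
  "right_action G S f \<longleftrightarrow>
     (\<forall>\<gamma>\<in>carrier G. \<forall>x\<in>S. f x \<gamma> \<in> S) \<and>
     (\<forall>x\<in>S. f x \<one>\<^bsub>G\<^esub> = x) \<and>
     (\<forall>x\<in>S. \<forall>\<gamma>\<in>carrier G. \<forall>\<delta>\<in>carrier G. f (f x \<gamma>) \<delta> = f x (\<gamma> \<otimes>\<^bsub>G\<^esub> \<delta>))"

definition mp_action :: "('g, 'c) monoid_scheme \<Rightarrow> 'a measure \<Rightarrow> ('a \<Rightarrow> 'g \<Rightarrow> 'a) \<Rightarrow> bool" where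
  "mp_action G M f \<longleftrightarrow> right_action G (space M) f \<and>
     (\<forall>\<gamma>\<in>carrier G. (\<lambda>x. f x \<gamma>) \<in> measurable M M \<and> distr M M (\<lambda>x. f x \<gamma>) = M)"

definition set_act :: "('a \<Rightarrow> 'g \<Rightarrow> 'a) \<Rightarrow> 'a set \<Rightarrow> 'g \<Rightarrow> 'a set" where
  "set_act f A \<gamma> = (\<lambda>x. f x \<gamma>) ` A"

definition ergodic_action :: "('g, 'c) monoid_scheme \<Rightarrow> 'a measure \<Rightarrow> ('a \<Rightarrow> 'g \<Rightarrow> 'a) \<Rightarrow> bool" where
  "ergodic_action G M f \<longleftrightarrow>
     (\<forall>A\<in>sets M. (\<forall>\<gamma>\<in>carrier G. set_act f A \<gamma> = A) \<longrightarrow> measure M A = 0 \<or> measure M A = 1)"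

definition almost_invariant :: "('g, 'c) monoid_scheme \<Rightarrow> 'a measure \<Rightarrow> ('a \<Rightarrow> 'g \<Rightarrow> 'a) \<Rightarrow> (nat \<Rightarrow> 'a set) \<Rightarrow> bool" where
  "almost_invariant G M f A \<longleftrightarrow> (\<forall>n. A n \<in> sets M) \<and>
     (\<forall>\<gamma>\<in>carrier G. (\<lambda>n. measure M (A n - set_act f (A n) \<gamma>)) \<longlonglongrightarrow> 0)"

definition trivial_seq :: "'a measure \<Rightarrow> (nat \<Rightarrow> 'a set) \<Rightarrow> bool" where
  "trivial_seq M A \<longleftrightarrow> (\<lambda>n. measure M (A n) * (1 - measure M (A n))) \<longlonglongrightarrow> 0"

definition strongly_ergodic :: "('g, 'c) monoid_scheme \<Rightarrow> 'a measure \<Rightarrow> ('a \<Rightarrow> 'g \<Rightarrow> 'a) \<Rightarrow> bool" where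
  "strongly_ergodic G M f \<longleftrightarrow> ergodic_action G M f \<and>
     (\<forall>A. almost_invariant G M f A \<longrightarrow> trivial_seq M A)"

text \<open>f (on M) weakly contains g (on N); the sets A_1..A_n are indexed by 0..n-1.\<close>
definition weakly_contains ::
  "('g, 'c) monoid_scheme \<Rightarrow> 'a measure \<Rightarrow> ('a \<Rightarrow> 'g \<Rightarrow> 'a) \<Rightarrow> 'b measure \<Rightarrow> ('b \<Rightarrow> 'g \<Rightarrow> 'b) \<Rightarrow> bool" where
  "weakly_contains G M f N g \<longleftrightarrow>
     (\<forall>n::nat. \<forall>A :: nat \<Rightarrow> 'b set. \<forall>F. \<forall>\<epsilon>::real.
        (\<forall>i<n. A i \<in> sets N) \<and> finite F \<and> F \<subseteq> carrier G \<and> \<epsilon> > 0 \<longrightarrow>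
        (\<exists>B :: nat \<Rightarrow> 'a set. (\<forall>i<n. B i \<in> sets M) \<and>
           (\<forall>i<n. \<forall>j<n. \<forall>\<gamma>\<in>F.
              \<bar>measure M (set_act f (B i) \<gamma> \<inter> B j) - measure N (set_act g (A i) \<gamma> \<inter> A j)\<bar> < \<epsilon>)))"

definition is_factor ::
  "('g, 'c) monoid_scheme \<Rightarrow> 'a measure \<Rightarrow> ('a \<Rightarrow> 'g \<Rightarrow> 'a) \<Rightarrow> 'b measure \<Rightarrow> ('b \<Rightarrow> 'g \<Rightarrow> 'b) \<Rightarrow> bool" where
  "is_factor G M f N g \<longleftrightarrow>
     (\<exists>\<Phi>. \<Phi> \<in> measurable M N \<and> distr M N \<Phi> = N \<and>
        (AE x in M. \<forall>\<gamma>\<in>carrier G. \<Phi> (f x \<gamma>) = g (\<Phi> x) \<gamma>))"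

end

theory Submission imports Defs "HOL-Library.Ramsey" begin


definition sd :: "'a set \<Rightarrow> 'a set \<Rightarrow> 'a set" where "sd P Q = (P - Q) \<union> (Q - P)"

context prob_space
begin

lemma sd_sets: "P \<in> sets M \<Longrightarrow> Q \<in> sets M \<Longrightarrow> sd P Q \<in> sets M"
  unfolding sd_def by auto

lemma sd_formula: assumes "P \<in> sets M" "Q \<in> sets M"
  shows "measure M (sd P Q) = measure M P + measure M Q - 2 * measure M (P \<inter> Q)"
proof -
  have "measure M (sd P Q) = measure M (P - Q) + measure M (Q - P)"
    unfolding sd_def using assms by (intro finite_measure_Union) auto
  also have "measure M (P - Q) = measure M P - measure M (P \<inter> Q)"
    using assms finite_measure_Diff' by simp
  also have "measure M (Q - P) = measure M Q - measure M (P \<inter> Q)"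
    using assms finite_measure_Diff' by (simp add: Int_commute)
  finally show ?thesis by simp
qed

lemma sd_tri: assumes "P \<in> sets M" "Q \<in> sets M" "R \<in> sets M"
  shows "measure M (sd P R) \<le> measure M (sd P Q) + measure M (sd Q R)"
proof -
  have "measure M (sd P R) \<le> measure M (sd P Q \<union> sd Q R)"
    using assms by (intro finite_measure_mono) (auto simp: sd_def)
  also have "\<dots> \<le> measure M (sd P Q) + measure M (sd Q R)"
    using assms by (intro measure_Un_le) (auto simp: sd_sets)
  finally show ?thesis .
qed

lemma sd_abs: assumes "P \<in> sets M" "Q \<in> sets M"
  shows "\<bar>measure M P - measure M Q\<bar> \<le> measure M (sd P Q)"
  using sd_formula[OF assms] finite_measure_mono[of "P \<inter> Q" P] finite_measure_mono[of "P \<inter> Q" Q] assms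
  by auto

lemma sd_int: assumes "P \<in> sets M" "Q \<in> sets M" "P' \<in> sets M" "Q' \<in> sets M"
  shows "\<bar>measure M (P \<inter> Q) - measure M (P' \<inter> Q')\<bar> \<le> measure M (sd P P') + measure M (sd Q Q')"
proof -
  have "\<bar>measure M (P \<inter> Q) - measure M (P' \<inter> Q')\<bar> \<le> measure M (sd (P \<inter> Q) (P' \<inter> Q'))"
    using assms by (intro sd_abs) auto
  also have "\<dots> \<le> measure M (sd P P' \<union> sd Q Q')"
    using assms by (intro finite_measure_mono) (auto simp: sd_def)
  also have "\<dots> \<le> measure M (sd P P') + measure M (sd Q Q')"
    using assms by (intro measure_Un_le) (auto simp: sd_sets)
  finally show ?thesis .
qed

lemma sum_le_union: assumes "finite S" "\<And>y. y \<in> S \<Longrightarrow> P y \<in> sets M"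
  shows "(\<Sum>y\<in>S. measure M (P y)) \<le> measure M (\<Union>y\<in>S. P y)
           + (\<Sum>y\<in>S. \<Sum>z\<in>S - {y}. measure M (P y \<inter> P z))"
  using assms
proof (induction S rule: finite_induct)
  case empty then show ?case by simp
next
  case (insert a S)
  let ?U = "\<Union>y\<in>S. P y"
  let ?D = "\<lambda>S. (\<Sum>y\<in>S. \<Sum>z\<in>S - {y}. measure M (P y \<inter> P z))"
  have PU: "P a \<in> sets M" "?U \<in> sets M" using insert by auto
  have IH: "(\<Sum>y\<in>S. measure M (P y)) \<le> measure M ?U + ?D S" using insert by blast
  have e1: "measure M (P a \<union> ?U) = measure M (P a) + measure M (?U - P a)"
  proof -
    have "P a \<union> ?U = P a \<union> (?U - P a)" by blast
    then show ?thesis using PU finite_measure_Union'[of "P a" "?U - P a"] by auto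
  qed
  have e2: "measure M (?U - P a) = measure M ?U - measure M (?U \<inter> P a)"
    using PU finite_measure_Diff' by blast
  have e3: "measure M (?U \<inter> P a) \<le> (\<Sum>z\<in>S. measure M (P a \<inter> P z))"
  proof -
    have "?U \<inter> P a = (\<Union>z\<in>S. P a \<inter> P z)" by blast
    then have "measure M (?U \<inter> P a) = measure M (\<Union>z\<in>S. P a \<inter> P z)" by simp
    also have "\<dots> \<le> (\<Sum>z\<in>S. measure M (P a \<inter> P z))"
      using insert by (intro measure_UNION_le) auto
    finally show ?thesis .
  qed
  have e4: "?D (insert a S) \<ge> (\<Sum>z\<in>S. measure M (P a \<inter> P z)) + ?D S"
  proof -
    have "?D (insert a S) = (\<Sum>z\<in>insert a S - {a}. measure M (P a \<inter> P z))
        + (\<Sum>y\<in>S. \<Sum>z\<in>insert a S - {y}. measure M (P y \<inter> P z))"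
      using insert(1,2) by (rule sum.insert)
    moreover have "insert a S - {a} = S" using insert(2) by blast
    moreover have "(\<Sum>y\<in>S. \<Sum>z\<in>insert a S - {y}. measure M (P y \<inter> P z)) \<ge> ?D S"
    proof (rule sum_mono)
      fix y assume "y \<in> S"
      show "(\<Sum>z\<in>S - {y}. measure M (P y \<inter> P z)) \<le> (\<Sum>z\<in>insert a S - {y}. measure M (P y \<inter> P z))"
        using insert(1) by (intro sum_mono2) auto
    qed
    ultimately show ?thesis by (simp only:)
  qed
  have s1: "(\<Sum>y\<in>insert a S. measure M (P y)) = measure M (P a) + (\<Sum>y\<in>S. measure M (P y))"
    using insert(1,2) by (rule sum.insert)
  have u1: "(\<Union>y\<in>insert a S. P y) = P a \<union> ?U" by blast
  show ?case unfolding s1 u1 using IH e1 e2 e3 e4 by linarith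
qed


lemma nat_step_change: fixes p :: "nat \<Rightarrow> bool"
  assumes "p a" "\<not> p (a + d)" shows "\<exists>k<d. p (a + k) \<and> \<not> p (a + Suc k)"
  using assms
proof (induction d)
  case 0 then show ?case by simp
next
  case (Suc d)
  show ?case
  proof (cases "p (a + d)")
    case True then show ?thesis using Suc by (intro exI[of _ d]) auto
  next
    case False then obtain k where "k < d" "p (a + k)" "\<not> p (a + Suc k)" using Suc by blast
    then show ?thesis by (intro exI[of _ k]) auto
  qed
qed

lemma cauchy_limit:
  fixes P :: "nat \<Rightarrow> 'a set"
  assumes P: "\<And>j. P j \<in> sets M"
    and cau: "\<And>e. e > 0 \<Longrightarrow> \<exists>J. \<forall>j\<ge>J. \<forall>l\<ge>J. measure M (sd (P j) (P l)) < e"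
  shows "\<exists>C\<in>sets M. \<forall>e>0. \<exists>J. \<forall>j\<ge>J. measure M (sd (P j) C) < e"
proof -
  have "\<forall>i. \<exists>J. \<forall>j\<ge>J. \<forall>l\<ge>J. measure M (sd (P j) (P l)) < (1/2)^i"
    using cau by simp
  then obtain J where J: "\<And>i j l. j \<ge> J i \<Longrightarrow> l \<ge> J i \<Longrightarrow> measure M (sd (P j) (P l)) < (1/2)^i"
    by metis
  define t where "t i = i + (\<Sum>k\<le>i. J k)" for i
  have tJ: "J k \<le> t i" if "k \<le> i" for k i
  proof -
    have "J k \<le> (\<Sum>k\<le>i. J k)" using that by (intro member_le_sum) auto
    then show ?thesis unfolding t_def by simp
  qed
  define Q where "Q i = P (t i)" for i
  have Q: "Q i \<in> sets M" for i unfolding Q_def using P by simp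
  have Qd: "measure M (sd (Q i) (Q (Suc i))) < (1/2)^i" for i
    unfolding Q_def by (intro J tJ) auto
  define C where "C = (\<Union>m. \<Inter>i. Q (m + i))"
  have C: "C \<in> sets M" unfolding C_def using Q by (intro sets.countable_nat_UN sets.countable_INT') auto
  define E where "E i k = sd (Q (i + k)) (Q (Suc (i + k)))" for i k
  have E: "E i k \<in> sets M" for i k unfolding E_def using Q by (simp add: sd_sets)
  have sub: "sd (Q i) C \<subseteq> (\<Union>k. E i k)" for i
  proof
    fix x assume x: "x \<in> sd (Q i) C"
    show "x \<in> (\<Union>k. E i k)"
    proof (cases "x \<in> Q i")
      case True
      with x have "x \<notin> C" unfolding sd_def by auto
      then obtain d where "x \<notin> Q (i + d)" unfolding C_def by blast
      from nat_step_change[of "\<lambda>n. x \<in> Q n", OF True this] obtain k where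
        "x \<in> Q (i + k)" "x \<notin> Q (i + Suc k)" by blast
      then show ?thesis unfolding E_def sd_def by auto
    next
      case False
      with x have "x \<in> C" unfolding sd_def by auto
      then obtain m where m: "\<And>k. x \<in> Q (m + k)" unfolding C_def by blast
      have "m > i"
      proof (rule ccontr)
        assume "\<not> m > i"
        then have "i = m + (i - m)" by simp
        then show False using m[of "i - m"] False by metis
      qed
      then have "x \<in> Q (i + (m - i))" using m[of 0] by simp
      from nat_step_change[of "\<lambda>n. x \<notin> Q n", OF False, of "m - i"] this obtain k where
        "x \<notin> Q (i + k)" "x \<in> Q (i + Suc k)" by blast
      then show ?thesis unfolding E_def sd_def by auto
    qed
  qed
  have sumE: "summable (\<lambda>k. measure M (E i k))" for i
  proof -
    have A: "\<exists>N. \<forall>n\<ge>N. norm (measure M (E i n)) \<le> (1/2) ^ (i + n)"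
      using Qd unfolding E_def by (auto intro: less_imp_le)
    have B: "summable (\<lambda>k. (1/2::real)^(i+k))"
      by (simp add: power_add summable_mult)
    show ?thesis using summable_comparison_test[OF A B] .
  qed
  have bound: "measure M (sd (Q i) C) \<le> 2 * (1/2)^i" for i
  proof -
    have "measure M (sd (Q i) C) \<le> measure M (\<Union>k. E i k)"
      using sub E Q C by (intro finite_measure_mono) (auto intro: sets.countable_nat_UN)
    also have "\<dots> \<le> (\<Sum>k. measure M (E i k))"
      using E sumE by (intro finite_measure_subadditive_countably) auto
    also have "\<dots> \<le> (\<Sum>k. (1/2::real)^(i+k))"
    proof (rule suminf_le)
      show "\<And>n. measure M (E i n) \<le> (1/2::real)^(i+n)"
        using Qd unfolding E_def by (auto intro: less_imp_le)
      show "summable (\<lambda>k. measure M (E i k))" by (rule sumE)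
      show "summable (\<lambda>k. (1/2::real)^(i+k))" by (simp add: power_add summable_mult)
    qed
    also have "(\<Sum>k. (1/2::real)^(i+k)) = 2 * (1/2)^i"
    proof -
      have "(\<lambda>k. (1/2::real)^(i+k)) = (\<lambda>k. (1/2)^i * (1/2)^k)" by (simp add: power_add)
      moreover have "(\<Sum>k. (1/2)^i * (1/2::real)^k) = (1/2)^i * 2"
        using suminf_geometric[of "1/2::real"] by (simp add: suminf_mult)
      ultimately show ?thesis by simp
    qed
    finally show ?thesis .
  qed
  show ?thesis
  proof (intro bexI[OF _ C] allI impI)
    fix e :: real assume e: "e > 0"
    obtain i where i: "(1/2::real)^i < e / 3"
      using real_arch_pow_inv[of "e/3" "1/2"] e by auto
    show "\<exists>J'. \<forall>j\<ge>J'. measure M (sd (P j) C) < e"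
    proof (intro exI[of _ "J i"] allI impI)
      fix j assume j: "j \<ge> J i"
      have "measure M (sd (P j) C) \<le> measure M (sd (P j) (Q i)) + measure M (sd (Q i) C)"
        using P Q C by (intro sd_tri)
      also have "measure M (sd (P j) (Q i)) < (1/2)^i"
        unfolding Q_def using j tJ by (intro J) auto
      finally show "measure M (sd (P j) C) < e" using bound[of i] i by linarith
    qed
  qed
qed
end

locale wc_setup =
  fixes G :: "('g, 'c) monoid_scheme"
    and M :: "'a::polish_space measure" and f :: "'a \<Rightarrow> 'g \<Rightarrow> 'a"
    and N :: "'b measure" and g :: "'b \<Rightarrow> 'g \<Rightarrow> 'b"
  assumes grp: "group G" and cnt: "countable (carrier G)"
    and PM: "prob_space M" and sM: "sets M = sets borel"
    and mpM: "mp_action G M f" and se: "strongly_ergodic G M f"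
    and PN: "prob_space N" and finN: "finite (space N)" and sN: "sets N = Pow (space N)"
    and pos: "\<forall>y\<in>space N. measure N {y} > 0"
    and mpN: "mp_action G N g"
    and wc: "weakly_contains G M f N g"
begin

lemma spM: "space M = UNIV"
  using sets_eq_imp_space_eq[OF sM] by simp

lemma actM: "\<And>x. f x \<one>\<^bsub>G\<^esub> = x"
  "\<And>x \<gamma> \<delta>. \<gamma> \<in> carrier G \<Longrightarrow> \<delta> \<in> carrier G \<Longrightarrow> f (f x \<gamma>) \<delta> = f x (\<gamma> \<otimes>\<^bsub>G\<^esub> \<delta>)"
  using mpM spM unfolding mp_action_def right_action_def by auto

lemma actM_inv: assumes "\<gamma> \<in> carrier G"
  shows "f (f x \<gamma>) (inv\<^bsub>G\<^esub> \<gamma>) = x" "f (f x (inv\<^bsub>G\<^esub> \<gamma>)) \<gamma> = x"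
  using assms actM grp by (simp_all add: group.inv_closed group.r_inv group.l_inv)

lemma set_act_pre: assumes "\<gamma> \<in> carrier G"
  shows "set_act f A \<gamma> = (\<lambda>x. f x (inv\<^bsub>G\<^esub> \<gamma>)) -` A"
  unfolding set_act_def
proof (intro equalityI subsetI)
  fix x assume "x \<in> (\<lambda>x. f x \<gamma>) ` A"
  then show "x \<in> (\<lambda>x. f x (inv\<^bsub>G\<^esub> \<gamma>)) -` A" using actM_inv[OF assms] by auto
next
  fix x assume "x \<in> (\<lambda>x. f x (inv\<^bsub>G\<^esub> \<gamma>)) -` A"
  then have "f (f x (inv\<^bsub>G\<^esub> \<gamma>)) \<gamma> \<in> (\<lambda>x. f x \<gamma>) ` A" by blast
  then show "x \<in> (\<lambda>x. f x \<gamma>) ` A" using actM_inv[OF assms] by simp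
qed

lemma pre_sets: assumes "\<gamma> \<in> carrier G" "A \<in> sets M"
  shows "(\<lambda>x. f x \<gamma>) -` A \<in> sets M"
proof -
  have "(\<lambda>x. f x \<gamma>) \<in> measurable M M" using mpM assms unfolding mp_action_def by auto
  from measurable_sets[OF this assms(2)] show ?thesis using spM by simp
qed

lemma pre_meas: assumes "\<gamma> \<in> carrier G" "A \<in> sets M"
  shows "measure M ((\<lambda>x. f x \<gamma>) -` A) = measure M A"
proof -
  have m: "(\<lambda>x. f x \<gamma>) \<in> measurable M M" and d: "distr M M (\<lambda>x. f x \<gamma>) = M"
    using mpM assms unfolding mp_action_def by auto
  have "measure M A = measure (distr M M (\<lambda>x. f x \<gamma>)) A" using d by simp
  also have "\<dots> = measure M ((\<lambda>x. f x \<gamma>) -` A \<inter> space M)" using measure_distr[OF m] assms by simp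
  finally show ?thesis using spM by simp
qed

lemma inv_car: "\<gamma> \<in> carrier G \<Longrightarrow> inv\<^bsub>G\<^esub> \<gamma> \<in> carrier G"
  using grp by (simp add: group.inv_closed)

lemma sa_sets: "\<gamma> \<in> carrier G \<Longrightarrow> A \<in> sets M \<Longrightarrow> set_act f A \<gamma> \<in> sets M"
  using set_act_pre pre_sets inv_car by simp

lemma sa_meas: "\<gamma> \<in> carrier G \<Longrightarrow> A \<in> sets M \<Longrightarrow> measure M (set_act f A \<gamma>) = measure M A"
  using set_act_pre pre_meas inv_car by simp

lemma sa_one: "set_act f A \<one>\<^bsub>G\<^esub> = A"
  unfolding set_act_def using actM by simp

lemma actN: "\<And>y \<gamma>. y \<in> space N \<Longrightarrow> \<gamma> \<in> carrier G \<Longrightarrow> g y \<gamma> \<in> space N"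
  "\<And>y. y \<in> space N \<Longrightarrow> g y \<one>\<^bsub>G\<^esub> = y"
  "\<And>y \<gamma> \<delta>. y \<in> space N \<Longrightarrow> \<gamma> \<in> carrier G \<Longrightarrow> \<delta> \<in> carrier G \<Longrightarrow> g (g y \<gamma>) \<delta> = g y (\<gamma> \<otimes>\<^bsub>G\<^esub> \<delta>)"
  using mpN unfolding mp_action_def right_action_def by auto

lemma actN_inv: assumes "\<gamma> \<in> carrier G" "y \<in> space N"
  shows "g (g y \<gamma>) (inv\<^bsub>G\<^esub> \<gamma>) = y" "g (g y (inv\<^bsub>G\<^esub> \<gamma>)) \<gamma> = y"
  using assms actN grp by (simp_all add: group.inv_closed group.r_inv group.l_inv)

lemma nu_act: assumes "\<gamma> \<in> carrier G" "y \<in> space N"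
  shows "measure N {g y \<gamma>} = measure N {y}"
proof -
  have m: "(\<lambda>x. g x \<gamma>) \<in> measurable N N" and d: "distr N N (\<lambda>x. g x \<gamma>) = N"
    using mpN assms unfolding mp_action_def by auto
  have gy: "g y \<gamma> \<in> space N" using actN assms by simp
  have pre: "(\<lambda>x. g x \<gamma>) -` {g y \<gamma>} \<inter> space N = {y}"
  proof (intro equalityI subsetI)
    fix x assume "x \<in> (\<lambda>x. g x \<gamma>) -` {g y \<gamma>} \<inter> space N"
    then have "g x \<gamma> = g y \<gamma>" "x \<in> space N" by auto
    then have "g (g x \<gamma>) (inv\<^bsub>G\<^esub> \<gamma>) = g (g y \<gamma>) (inv\<^bsub>G\<^esub> \<gamma>)" by simp
    then show "x \<in> {y}" using actN_inv assms \<open>x \<in> space N\<close> by simp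
  qed (use assms in auto)
  have "measure N {g y \<gamma>} = measure (distr N N (\<lambda>x. g x \<gamma>)) {g y \<gamma>}" using d by simp
  also have "\<dots> = measure N {y}" using measure_distr[OF m] gy sN pre by simp
  finally show ?thesis .
qed


interpretation pM: prob_space M by (rule PM)
interpretation pN: prob_space N by (rule PN)

definition en where "en = from_nat_into (carrier G)"
definition FF where "FF m = en ` {..m} \<union> {\<one>\<^bsub>G\<^esub>}"
definition eps :: "nat \<Rightarrow> real" where "eps m = 1 / real (Suc m)"

lemma carrier_ne: "carrier G \<noteq> {}"
  using grp group.is_monoid monoid.one_closed by blast

lemma FF_props: "finite (FF m)" "FF m \<subseteq> carrier G" "\<one>\<^bsub>G\<^esub> \<in> FF m"
  unfolding FF_def en_def using from_nat_into[OF carrier_ne] grp group.is_monoid monoid.one_closed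
  by auto

lemma FF_ev: assumes "\<gamma> \<in> carrier G" shows "\<exists>i. \<forall>m\<ge>i. \<gamma> \<in> FF m"
proof -
  obtain i where "en i = \<gamma>" unfolding en_def using from_nat_into_surj[OF cnt assms] by blast
  then show ?thesis unfolding FF_def by (intro exI[of _ i]) auto
qed

lemma eps_pos: "eps m > 0" unfolding eps_def by simp

lemma eps_mono: "m \<le> k \<Longrightarrow> eps k \<le> eps m"
  unfolding eps_def by (simp add: frac_le)

lemma eps_small: assumes "e > 0" shows "\<exists>K. \<forall>m\<ge>K. eps m < e"
proof -
  obtain K where K: "K > 0" "inverse (real K) < e" using ex_inverse_of_nat_less[OF assms] by blast
  show ?thesis
  proof (intro exI[of _ K] allI impI)
    fix m assume "K \<le> m"
    then have "eps m \<le> eps K" by (rule eps_mono)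
    also have "eps K < inverse (real K)" unfolding eps_def using K by (simp add: field_simps)
    finally show "eps m < e" using K by linarith
  qed
qed

definition wprop where
  "wprop B m \<longleftrightarrow> (\<forall>y\<in>space N. B y \<in> sets M) \<and>
     (\<forall>y\<in>space N. \<forall>z\<in>space N. \<forall>\<gamma>\<in>FF m.
        \<bar>measure M (set_act f (B y) \<gamma> \<inter> B z) - measure N (set_act g {y} \<gamma> \<inter> {z})\<bar> < eps m)"

lemma wprop_ex: "\<exists>B. wprop B m"
proof -
  obtain e where e: "bij_betw e {0..<card (space N)} (space N)"
    using ex_bij_betw_nat_finite[OF finN] by blast
  let ?n = "card (space N)"
  have "\<exists>B :: nat \<Rightarrow> 'a set. (\<forall>i<?n. B i \<in> sets M) \<and>
           (\<forall>i<?n. \<forall>j<?n. \<forall>\<gamma>\<in>FF m.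
              \<bar>measure M (set_act f (B i) \<gamma> \<inter> B j) - measure N (set_act g {e i} \<gamma> \<inter> {e j})\<bar> < eps m)"
    using wc FF_props eps_pos unfolding weakly_contains_def
    apply (elim allE[of _ ?n] allE[of _ "\<lambda>i. {e i}"] allE[of _ "FF m"] allE[of _ "eps m"])
    using e sN bij_betwE by fastforce
  then obtain Bi where Bi: "\<forall>i<?n. Bi i \<in> sets M"
    "\<forall>i<?n. \<forall>j<?n. \<forall>\<gamma>\<in>FF m.
       \<bar>measure M (set_act f (Bi i) \<gamma> \<inter> Bi j) - measure N (set_act g {e i} \<gamma> \<inter> {e j})\<bar> < eps m"
    by blast
  define ie where "ie = inv_into {0..<?n} e"
  have ie: "y \<in> space N \<Longrightarrow> ie y < ?n \<and> e (ie y) = y" for y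
    unfolding ie_def using e
    by (metis atLeastLessThan_iff bij_betw_def f_inv_into_f inv_into_into)
  show ?thesis
    unfolding wprop_def
    by (intro exI[of _ "\<lambda>y. Bi (ie y)"] conjI ballI) (use Bi ie in metis)+
qed

definition Bp where "Bp m = (SOME B. wprop B m)"

lemma Bp: "wprop (Bp m) m"
  unfolding Bp_def using wprop_ex someI_ex by metis

lemma Bp_sets: "y \<in> space N \<Longrightarrow> Bp m y \<in> sets M"
  using Bp unfolding wprop_def by blast

lemma Bp_approx: "y \<in> space N \<Longrightarrow> z \<in> space N \<Longrightarrow> \<gamma> \<in> FF m \<Longrightarrow>
  \<bar>measure M (set_act f (Bp m y) \<gamma> \<inter> Bp m z) - (if g y \<gamma> = z then measure N {y} else 0)\<bar> < eps m"
proof -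
  assume a: "y \<in> space N" "z \<in> space N" "\<gamma> \<in> FF m"
  have gc: "\<gamma> \<in> carrier G" using a FF_props by blast
  have "measure N (set_act g {y} \<gamma> \<inter> {z}) = (if g y \<gamma> = z then measure N {y} else 0)"
  proof (cases "g y \<gamma> = z")
    case True
    then have "set_act g {y} \<gamma> \<inter> {z} = {g y \<gamma>}" unfolding set_act_def by auto
    then show ?thesis using True nu_act[OF gc a(1)] by simp
  next
    case False
    then have "set_act g {y} \<gamma> \<inter> {z} = {}" unfolding set_act_def by auto
    then show ?thesis using False by simp
  qed
  moreover have "\<bar>measure M (set_act f (Bp m y) \<gamma> \<inter> Bp m z) - measure N (set_act g {y} \<gamma> \<inter> {z})\<bar> < eps m"
    using Bp a unfolding wprop_def by blast
  ultimately show ?thesis by simp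
qed

end
context wc_setup begin
interpretation pM: prob_space M by (rule PM)
interpretation pN: prob_space N by (rule PN)
lemma F1: "y \<in> space N \<Longrightarrow> \<bar>measure M (Bp m y) - measure N {y}\<bar> < eps m"
  using Bp_approx[of y y "\<one>\<^bsub>G\<^esub>" m] FF_props actN(2) sa_one by simp

lemma F2: "y \<in> space N \<Longrightarrow> z \<in> space N \<Longrightarrow> y \<noteq> z \<Longrightarrow> measure M (Bp m y \<inter> Bp m z) < eps m"
  using Bp_approx[of y z "\<one>\<^bsub>G\<^esub>" m] FF_props actN(2) sa_one by simp

lemma F3: assumes "y \<in> space N" "\<gamma> \<in> FF m"
  shows "measure M (sd (set_act f (Bp m y) \<gamma>) (Bp m (g y \<gamma>))) < 4 * eps m"
proof -
  have gc: "\<gamma> \<in> carrier G" using assms FF_props by blast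
  have gy: "g y \<gamma> \<in> space N" using actN(1) assms gc by blast
  have s1: "set_act f (Bp m y) \<gamma> \<in> sets M" using sa_sets gc Bp_sets assms by blast
  have s2: "Bp m (g y \<gamma>) \<in> sets M" using Bp_sets gy by blast
  have m1: "measure M (set_act f (Bp m y) \<gamma>) = measure M (Bp m y)" using sa_meas gc Bp_sets assms by blast
  have a1: "\<bar>measure M (Bp m y) - measure N {y}\<bar> < eps m" using F1 assms by blast
  have a2: "\<bar>measure M (Bp m (g y \<gamma>)) - measure N {y}\<bar> < eps m"
    using F1[OF gy] nu_act[OF gc assms(1)] by simp
  have a3: "\<bar>measure M (set_act f (Bp m y) \<gamma> \<inter> Bp m (g y \<gamma>)) - measure N {y}\<bar> < eps m"
    using Bp_approx[OF assms(1) gy assms(2)] by simp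
  show ?thesis using pM.sd_formula[OF s1 s2] m1 a1 a2 a3 by linarith
qed

lemma sumN1: "(\<Sum>y\<in>space N. measure N {y}) = 1"
proof -
  have "measure N (space N) = (\<Sum>y\<in>space N. measure N {y})"
    using finN sN by (intro measure_eq_sum_singleton) (auto simp: pN.emeasure_finite)
  then show ?thesis using pN.prob_space by simp
qed

lemma F4: "measure M (\<Union>y\<in>space N. Bp m y) \<ge> 1 - (real (card (space N)) + real (card (space N)) * real (card (space N))) * eps m"
proof -
  let ?n = "real (card (space N))"
  have "(\<Sum>y\<in>space N. measure M (Bp m y)) \<le> measure M (\<Union>y\<in>space N. Bp m y)
           + (\<Sum>y\<in>space N. \<Sum>z\<in>space N - {y}. measure M (Bp m y \<inter> Bp m z))"
    using finN Bp_sets by (intro pM.sum_le_union) auto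
  moreover have "(\<Sum>y\<in>space N. \<Sum>z\<in>space N - {y}. measure M (Bp m y \<inter> Bp m z)) \<le> ?n * (?n * eps m)"
  proof -
    have "(\<Sum>z\<in>space N - {y}. measure M (Bp m y \<inter> Bp m z)) \<le> ?n * eps m" if "y \<in> space N" for y
    proof -
      have "(\<Sum>z\<in>space N - {y}. measure M (Bp m y \<inter> Bp m z)) \<le> real (card (space N - {y})) * eps m"
        using F2 that by (intro sum_bounded_above) (auto intro: less_imp_le)
      also have "\<dots> \<le> ?n * eps m"
        using eps_pos finN by (intro mult_right_mono) (auto simp: card_mono less_imp_le)
      finally show ?thesis .
    qed
    then have "(\<Sum>y\<in>space N. \<Sum>z\<in>space N - {y}. measure M (Bp m y \<inter> Bp m z)) \<le> real (card (space N)) * (?n * eps m)"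
      by (intro sum_bounded_above) auto
    then show ?thesis by simp
  qed
  moreover have "(\<Sum>y\<in>space N. measure M (Bp m y)) \<ge> (\<Sum>y\<in>space N. measure N {y} - eps m)"
    using F1 by (intro sum_mono) (smt (verit))
  moreover have "(\<Sum>y\<in>space N. measure N {y} - eps m) = 1 - ?n * eps m"
    using sumN1 by (simp add: sum_subtractf)
  ultimately show ?thesis by (simp add: algebra_simps)
qed

lemma dichotomy:
  fixes A :: "nat \<Rightarrow> nat \<Rightarrow> 'a set"
  assumes A: "\<And>m k. A m k \<in> sets M"
    and ai: "\<And>\<gamma> e. \<gamma> \<in> carrier G \<Longrightarrow> e > 0 \<Longrightarrow>
       \<exists>M0. \<forall>m k. M0 \<le> m \<longrightarrow> M0 \<le> k \<longrightarrow> measure M (A m k - set_act f (A m k) \<gamma>) < e"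
    and e: "e > 0"
  shows "\<exists>M0. \<forall>m k. M0 \<le> m \<longrightarrow> M0 \<le> k \<longrightarrow> measure M (A m k) * (1 - measure M (A m k)) < e"
proof (rule ccontr)
  assume "\<not> ?thesis"
  then have "\<forall>M0. \<exists>m k. M0 \<le> m \<and> M0 \<le> k \<and> \<not> measure M (A m k) * (1 - measure M (A m k)) < e"
    by blast
  then obtain mm kk where mk: "\<And>i. i \<le> mm i" "\<And>i. i \<le> kk i"
    "\<And>i. \<not> measure M (A (mm i) (kk i)) * (1 - measure M (A (mm i) (kk i))) < e"
    by metis
  define Z where "Z i = A (mm i) (kk i)" for i
  have "almost_invariant G M f Z"
    unfolding almost_invariant_def
  proof (intro conjI allI ballI)
    show "Z n \<in> sets M" for n using A unfolding Z_def by simp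
    fix \<gamma> assume g: "\<gamma> \<in> carrier G"
    show "(\<lambda>n. measure M (Z n - set_act f (Z n) \<gamma>)) \<longlonglongrightarrow> 0"
    proof (rule LIMSEQ_I)
      fix r :: real assume r: "r > 0"
      obtain M0 where M0: "\<And>m k. M0 \<le> m \<Longrightarrow> M0 \<le> k \<Longrightarrow> measure M (A m k - set_act f (A m k) \<gamma>) < r"
        using ai[OF g r] by blast
      show "\<exists>no. \<forall>n\<ge>no. norm (measure M (Z n - set_act f (Z n) \<gamma>) - 0) < r"
      proof (intro exI[of _ M0] allI impI)
        fix n assume "M0 \<le> n"
        then have "measure M (Z n - set_act f (Z n) \<gamma>) < r"
          unfolding Z_def using M0 mk(1,2) order_trans by blast
        then show "norm (measure M (Z n - set_act f (Z n) \<gamma>) - 0) < r" by simp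
      qed
    qed
  qed
  then have "trivial_seq M Z" using se unfolding strongly_ergodic_def by blast
  then have "(\<lambda>n. measure M (Z n) * (1 - measure M (Z n))) \<longlonglongrightarrow> 0" unfolding trivial_seq_def .
  from LIMSEQ_D[OF this e] obtain no where "\<And>n. n \<ge> no \<Longrightarrow> norm (measure M (Z n) * (1 - measure M (Z n)) - 0) < e"
    by blast
  then have "norm (measure M (Z no) * (1 - measure M (Z no))) < e" by simp
  then have "measure M (Z no) * (1 - measure M (Z no)) < e"
    by (metis abs_ge_self order.strict_trans1 real_norm_def)
  then show False using mk(3) unfolding Z_def by blast
qed
definition Agr where "Agr m k = (\<Union>y\<in>space N. Bp m y \<inter> Bp k y)"

lemma Agr_sets: "Agr m k \<in> sets M"
  unfolding Agr_def using finN Bp_sets by (intro sets.finite_UN) auto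

lemma Agr_sym: "Agr m k = Agr k m"
  unfolding Agr_def by blast

lemma sa_sd: "\<gamma> \<in> carrier G \<Longrightarrow> set_act f (sd P Q) \<gamma> = sd (set_act f P \<gamma>) (set_act f Q \<gamma>)"
  using set_act_pre unfolding sd_def by auto

lemma A2: assumes "\<gamma> \<in> FF m" "\<gamma> \<in> FF k"
  shows "measure M (Agr m k - set_act f (Agr m k) \<gamma>)
     \<le> real (card (space N)) * (4 * eps m) + real (card (space N)) * (4 * eps k)"
proof -
  have gc: "\<gamma> \<in> carrier G" using assms FF_props by blast
  let ?D = "\<lambda>m y. sd (set_act f (Bp m y) \<gamma>) (Bp m (g y \<gamma>))"
  have Ds: "y \<in> space N \<Longrightarrow> ?D m y \<in> sets M" for m y
    using sa_sets[OF gc] Bp_sets actN(1)[OF _ gc] by (intro pM.sd_sets) auto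
  have sub: "Agr m k - set_act f (Agr m k) \<gamma> \<subseteq> (\<Union>y\<in>space N. ?D m y \<union> ?D k y)"
  proof
    fix x assume x: "x \<in> Agr m k - set_act f (Agr m k) \<gamma>"
    then obtain z where z: "z \<in> space N" "x \<in> Bp m z" "x \<in> Bp k z" unfolding Agr_def by blast
    define y where "y = g z (inv\<^bsub>G\<^esub> \<gamma>)"
    have y: "y \<in> space N" "g y \<gamma> = z" unfolding y_def using actN(1) inv_car gc z actN_inv by auto
    have "\<not> (x \<in> set_act f (Bp m y) \<gamma> \<and> x \<in> set_act f (Bp k y) \<gamma>)"
    proof
      assume "x \<in> set_act f (Bp m y) \<gamma> \<and> x \<in> set_act f (Bp k y) \<gamma>"
      then have "f x (inv\<^bsub>G\<^esub> \<gamma>) \<in> Agr m k" unfolding set_act_pre[OF gc] Agr_def using y by auto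
      then show False using x unfolding set_act_pre[OF gc] by auto
    qed
    then show "x \<in> (\<Union>y\<in>space N. ?D m y \<union> ?D k y)"
      using y z unfolding sd_def by blast
  qed
  have "measure M (Agr m k - set_act f (Agr m k) \<gamma>) \<le> measure M (\<Union>y\<in>space N. ?D m y \<union> ?D k y)"
    using sub Ds finN by (intro pM.finite_measure_mono) auto
  also have "\<dots> \<le> (\<Sum>y\<in>space N. measure M (?D m y \<union> ?D k y))"
    using Ds finN by (intro measure_UNION_le) auto
  also have "\<dots> \<le> (\<Sum>y\<in>space N. 4 * eps m + 4 * eps k)"
  proof (rule sum_mono)
    fix y assume y: "y \<in> space N"
    have "measure M (?D m y \<union> ?D k y) \<le> measure M (?D m y) + measure M (?D k y)"
      using Ds y by (intro measure_Un_le) auto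
    then show "measure M (?D m y \<union> ?D k y) \<le> 4 * eps m + 4 * eps k"
      using F3[OF y assms(1)] F3[OF y assms(2)] by linarith
  qed
  also have "\<dots> = real (card (space N)) * (4 * eps m) + real (card (space N)) * (4 * eps k)"
    by (simp add: algebra_simps)
  finally show ?thesis .
qed

lemma DI: assumes "e > 0"
  shows "\<exists>M0. \<forall>m k. M0 \<le> m \<longrightarrow> M0 \<le> k \<longrightarrow> measure M (Agr m k) * (1 - measure M (Agr m k)) < e"
proof (rule dichotomy[OF Agr_sets _ assms])
  fix \<gamma> and e :: real assume gc: "\<gamma> \<in> carrier G" and e: "e > 0"
  obtain i where i: "\<And>m. m \<ge> i \<Longrightarrow> \<gamma> \<in> FF m" using FF_ev[OF gc] by blast
  let ?n = "real (card (space N))"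
  obtain K where K: "\<And>m. m \<ge> K \<Longrightarrow> eps m < e / (8 * ?n + 1)"
    using eps_small[of "e / (8 * ?n + 1)"] e by auto
  show "\<exists>M0. \<forall>m k. M0 \<le> m \<longrightarrow> M0 \<le> k \<longrightarrow> measure M (Agr m k - set_act f (Agr m k) \<gamma>) < e"
  proof (intro exI[of _ "max i K"] allI impI)
    fix m k assume mk: "max i K \<le> m" "max i K \<le> k"
    have "measure M (Agr m k - set_act f (Agr m k) \<gamma>) \<le> ?n * (4 * eps m) + ?n * (4 * eps k)"
      using mk i by (intro A2) auto
    also have "\<dots> < e"
    proof -
      define c where "c = e / (8 * ?n + 1)"
      have c: "c > 0" unfolding c_def using e by (simp add: add_pos_nonneg)
      have n0: "?n \<ge> 0" by simp
      have "?n * (4 * eps m) \<le> ?n * (4 * c)"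
        using K[of m] mk unfolding c_def by (intro mult_left_mono) auto
      moreover have "?n * (4 * eps k) \<le> ?n * (4 * c)"
        using K[of k] mk unfolding c_def by (intro mult_left_mono) auto
      moreover have "(8 * ?n + 1) * c = e" unfolding c_def by (simp add: add_pos_nonneg)
      ultimately show ?thesis using c by (simp add: algebra_simps)
    qed
    finally show "measure M (Agr m k - set_act f (Agr m k) \<gamma>) < e" .
  qed
qed

lemma compl_sets: "A \<in> sets M \<Longrightarrow> UNIV - A \<in> sets M"
  using sets.compl_sets[of A M] spM by simp

definition UU where "UU m = (\<Union>y\<in>space N. Bp m y)"

lemma UU_sets: "UU m \<in> sets M"
  unfolding UU_def using finN Bp_sets by (intro sets.finite_UN) auto

lemma PH: fixes h :: "nat \<Rightarrow> nat"
  shows "1 \<le> (\<Sum>j\<le>card (space N). 1 - measure M (UU (h j)))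
     + (\<Sum>j\<le>card (space N). \<Sum>l\<in>{..card (space N)} - {j}. measure M (Agr (h j) (h l)))"
proof -
  let ?n = "card (space N)"
  let ?A = "\<Union>j\<le>?n. UNIV - UU (h j)"
  let ?B = "\<Union>j\<le>?n. \<Union>l\<in>{..?n} - {j}. Agr (h j) (h l)"
  have As: "?A \<in> sets M" using UU_sets compl_sets by (intro sets.finite_UN) auto
  have Bs: "?B \<in> sets M" using Agr_sets by (intro sets.finite_UN) auto
  have cov: "UNIV \<subseteq> ?A \<union> ?B"
  proof
    fix x :: 'a
    show "x \<in> ?A \<union> ?B"
    proof (cases "\<exists>j\<le>?n. x \<notin> UU (h j)")
      case True then show ?thesis by blast
    next
      case False
      then have "\<forall>j\<in>{..?n}. \<exists>y\<in>space N. x \<in> Bp (h j) y" unfolding UU_def by auto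
      then obtain lab where lab: "\<And>j. j \<in> {..?n} \<Longrightarrow> lab j \<in> space N \<and> x \<in> Bp (h j) (lab j)"
        by metis
      have "card (lab ` {..?n}) \<le> ?n" using lab finN by (intro card_mono) auto
      then have "card (lab ` {..?n}) < card {..?n}" by simp
      then have "\<not> inj_on lab {..?n}" by (rule pigeonhole)
      then obtain j l where jl: "j \<in> {..?n}" "l \<in> {..?n}" "j \<noteq> l" "lab j = lab l"
        unfolding inj_on_def by blast
      then have "x \<in> Agr (h j) (h l)" unfolding Agr_def using lab[of j] lab[of l] by auto
      then show ?thesis using jl by blast
    qed
  qed
  have "1 = measure M (space M)" using pM.prob_space by simp
  also have "\<dots> \<le> measure M (?A \<union> ?B)" using cov spM As Bs by (intro pM.finite_measure_mono) auto
  also have "\<dots> \<le> measure M ?A + measure M ?B" using As Bs by (intro measure_Un_le)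
  also have "measure M ?A \<le> (\<Sum>j\<le>?n. measure M (UNIV - UU (h j)))"
    using UU_sets compl_sets by (intro measure_UNION_le) auto
  also have "(\<Sum>j\<le>?n. measure M (UNIV - UU (h j))) = (\<Sum>j\<le>?n. 1 - measure M (UU (h j)))"
    using pM.prob_compl UU_sets spM by simp
  also have "measure M ?B \<le> (\<Sum>j\<le>?n. measure M (\<Union>l\<in>{..?n} - {j}. Agr (h j) (h l)))"
    using Agr_sets by (intro measure_UNION_le) auto
  also have "\<dots> \<le> (\<Sum>j\<le>?n. \<Sum>l\<in>{..?n} - {j}. measure M (Agr (h j) (h l)))"
    using Agr_sets by (intro sum_mono measure_UNION_le) auto
  finally show ?thesis by simp
qed

lemma A4: assumes y: "y \<in> space N"
  shows "measure M (sd (Bp m y) (Bp k y))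
    \<le> (1 - measure M (Agr m k)) + real (card (space N)) * eps m + real (card (space N)) * eps k"
proof -
  let ?n = "real (card (space N))"
  let ?O = "\<lambda>m. \<Union>z\<in>space N - {y}. Bp m y \<inter> Bp m z"
  have Os: "?O m \<in> sets M" for m using finN Bp_sets y by (intro sets.finite_UN) auto
  have sub: "sd (Bp m y) (Bp k y) \<subseteq> (UNIV - Agr m k) \<union> ?O m \<union> ?O k"
    unfolding sd_def Agr_def by blast
  have Om: "measure M (?O m) \<le> ?n * eps m" for m
  proof -
    have "measure M (?O m) \<le> (\<Sum>z\<in>space N - {y}. measure M (Bp m y \<inter> Bp m z))"
      using finN Bp_sets y by (intro measure_UNION_le) auto
    also have "\<dots> \<le> real (card (space N - {y})) * eps m"
      using F2 y by (intro sum_bounded_above) (auto intro: less_imp_le)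
    also have "\<dots> \<le> ?n * eps m"
      using eps_pos finN by (intro mult_right_mono) (auto simp: card_mono less_imp_le)
    finally show ?thesis .
  qed
  have "measure M (sd (Bp m y) (Bp k y)) \<le> measure M ((UNIV - Agr m k) \<union> ?O m \<union> ?O k)"
    using sub Os Agr_sets compl_sets by (intro pM.finite_measure_mono sets.Un) auto
  also have "\<dots> \<le> measure M ((UNIV - Agr m k) \<union> ?O m) + measure M (?O k)"
    using Os Agr_sets compl_sets by (intro measure_Un_le sets.Un) auto
  also have "measure M ((UNIV - Agr m k) \<union> ?O m) \<le> measure M (UNIV - Agr m k) + measure M (?O m)"
    using Os Agr_sets compl_sets by (intro measure_Un_le sets.Un) auto
  also have "measure M (UNIV - Agr m k) = 1 - measure M (Agr m k)"
    using pM.prob_compl Agr_sets spM by simp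
  finally show ?thesis using Om[of m] Om[of k] by linarith
qed

lemma small_prod: fixes a e :: real
  assumes "a * (1 - a) < e" "0 \<le> a" "a < 1/2" shows "a < 2 * e"
proof -
  have "a * (1/2) \<le> a * (1 - a)" using assms by (intro mult_left_mono) auto
  then show ?thesis using assms by linarith
qed

lemma large_prod: fixes a e :: real
  assumes "a * (1 - a) < e" "a \<le> 1" "a \<ge> 1/2" shows "1 - a < 2 * e"
proof -
  have "(1 - a) * (1/2) \<le> a * (1 - a)" using assms mult_left_mono[of "1/2" a "1 - a"] by (simp add: mult.commute)
  then have "(1 - a) * (1/2) < e" using assms(1) by linarith
  then show ?thesis by (simp add: field_simps)
qed

lemma cauchy_sub:
  "\<exists>s::nat\<Rightarrow>nat. strict_mono s \<and> (\<forall>y\<in>space N. \<forall>e>0. \<exists>J. \<forall>j\<ge>J. \<forall>l\<ge>J. measure M (sd (Bp (s j) y) (Bp (s l) y)) < e)"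
proof -
  let ?n = "card (space N)"
  let ?r = "real ?n"
  define col where "col X = (if \<exists>m k. X = {m, k} \<and> measure M (Agr m k) \<ge> 1/2 then 0 else 1::nat)"
    for X :: "nat set"
  have col: "x \<noteq> y \<Longrightarrow> col {x, y} = 0 \<longleftrightarrow> measure M (Agr x y) \<ge> 1/2" for x y
    unfolding col_def using Agr_sym by (auto simp: doubleton_eq_iff)
  have "\<forall>x\<in>(UNIV::nat set). \<forall>y\<in>UNIV. x \<noteq> y \<longrightarrow> col {x, y} < 2" unfolding col_def by auto
  from Ramsey2[OF infinite_UNIV_nat this] obtain S t where
    S: "infinite S" "t < 2" "\<forall>x\<in>S. \<forall>y\<in>S. x \<noteq> y \<longrightarrow> col {x, y} = t" by blast
  define s where "s = enumerate S"
  have sm: "strict_mono s" unfolding s_def using S(1) by (simp add: strict_mono_def enumerate_mono)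
  have sS: "s j \<in> S" for j unfolding s_def using S(1) by (rule enumerate_in_set)
  have sj: "j \<le> s j" for j using seq_suble[OF sm] .
  have sinj: "j \<noteq> l \<Longrightarrow> s j \<noteq> s l" for j l using sm strict_mono_eq by blast
  show ?thesis
  proof (cases "t = 0")
    case False
    then have small: "\<And>j l. j \<noteq> l \<Longrightarrow> measure M (Agr (s j) (s l)) < 1/2"
      using S(3) sS sinj col by (metis not_le)
    define e0 where "e0 = 1 / (8 * (?r + 1) * (?r + 1))"
    have e0: "e0 > 0" unfolding e0_def by (simp add: add_pos_nonneg)
    obtain M0 where M0: "\<And>m k. M0 \<le> m \<Longrightarrow> M0 \<le> k \<Longrightarrow> measure M (Agr m k) * (1 - measure M (Agr m k)) < e0"
      using DI[OF e0] by blast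
    define c where "c = 1 / (4 * (?r + 1) * (?r + ?r * ?r) + 1)"
    have "0 \<le> 4 * (?r + 1) * (?r + ?r * ?r)" by simp
    then have "0 < 4 * (?r + 1) * (?r + ?r * ?r) + 1" by linarith
    then have c: "c > 0" unfolding c_def by (simp only: zero_less_divide_1_iff)
    obtain K where K: "\<And>m. m \<ge> K \<Longrightarrow> eps m < c" using eps_small[OF c] by blast
    define h where "h j = s (max M0 K + j)" for j
    have hge: "max M0 K \<le> h j" for j unfolding h_def using sj[of "max M0 K + j"] le_add1 order_trans by blast
    have T1: "(\<Sum>j\<le>?n. \<Sum>l\<in>{..?n} - {j}. measure M (Agr (h j) (h l))) \<le> (?r + 1) * (?r * (2 * e0))"
    proof -
      have "(\<Sum>l\<in>{..?n} - {j}. measure M (Agr (h j) (h l))) \<le> ?r * (2 * e0)" if "j \<le> ?n" for j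
      proof -
        have "(\<Sum>l\<in>{..?n} - {j}. measure M (Agr (h j) (h l))) \<le> real (card ({..?n} - {j})) * (2 * e0)"
        proof (rule sum_bounded_above)
          fix l assume l: "l \<in> {..?n} - {j}"
          then have "j \<noteq> l" by auto
          have "measure M (Agr (h j) (h l)) < 1/2" unfolding h_def using small \<open>j \<noteq> l\<close> by simp
          moreover have "measure M (Agr (h j) (h l)) * (1 - measure M (Agr (h j) (h l))) < e0"
            using M0 hge by (meson max.boundedE)
          ultimately show "measure M (Agr (h j) (h l)) \<le> 2 * e0"
            using small_prod by (meson less_imp_le measure_nonneg)
        qed
        also have "real (card ({..?n} - {j})) = ?r" using that by simp
        finally show ?thesis .
      qed
      then have "(\<Sum>j\<le>?n. \<Sum>l\<in>{..?n} - {j}. measure M (Agr (h j) (h l))) \<le> real (card {..?n}) * (?r * (2 * e0))"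
        by (intro sum_bounded_above) auto
      then show ?thesis by (simp add: add.commute)
    qed
    have T1': "(?r + 1) * (?r * (2 * e0)) \<le> 1/4"
    proof -
      have "(?r + 1) * (?r * (2 * e0)) \<le> (?r + 1) * ((?r + 1) * (2 * e0))"
        using e0 by (intro mult_left_mono mult_right_mono) auto
      also have "\<dots> = 1/4"
      proof -
        have d: "8 * (?r + 1) * (?r + 1) > 0" by (intro mult_pos_pos) auto
        then have "e0 * (8 * (?r + 1) * (?r + 1)) = 1" unfolding e0_def by simp
        then show ?thesis by (simp add: algebra_simps)
      qed
      finally show ?thesis .
    qed
    have T2: "(\<Sum>j\<le>?n. 1 - measure M (UU (h j))) \<le> (?r + 1) * ((?r + ?r * ?r) * c)"
    proof -
      have "1 - measure M (UU (h j)) \<le> (?r + ?r * ?r) * c" for j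
      proof -
        have "1 - measure M (UU (h j)) \<le> (?r + ?r * ?r) * eps (h j)" using F4[of "h j"] unfolding UU_def by simp
        also have "\<dots> \<le> (?r + ?r * ?r) * c" using K[of "h j"] hge by (intro mult_left_mono) auto
        finally show ?thesis .
      qed
      then have "(\<Sum>j\<le>?n. 1 - measure M (UU (h j))) \<le> real (card {..?n}) * ((?r + ?r * ?r) * c)"
        by (intro sum_bounded_above) auto
      then show ?thesis by (simp add: add.commute)
    qed
    have T2': "(?r + 1) * ((?r + ?r * ?r) * c) < 1/4"
    proof -
      define X where "X = 4 * ((?r + 1) * (?r + ?r * ?r))"
      have X: "X \<ge> 0" unfolding X_def by simp
      have "c = 1 / (X + 1)" unfolding c_def X_def by (simp add: algebra_simps)
      then have "X * c = X / (X + 1)" by simp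
      also have "\<dots> < 1" using X by simp
      finally have "4 * ((?r + 1) * (?r + ?r * ?r)) * c < 1" unfolding X_def .
      then show ?thesis by (simp add: algebra_simps)
    qed
    from PH[of h] T1 T1' T2 T2' show ?thesis by linarith
  next
    case True
    then have large: "\<And>j l. j \<noteq> l \<Longrightarrow> measure M (Agr (s j) (s l)) \<ge> 1/2"
      using S(3) sS sinj col by metis
    have "\<forall>y\<in>space N. \<forall>e>0. \<exists>J. \<forall>j\<ge>J. \<forall>l\<ge>J. measure M (sd (Bp (s j) y) (Bp (s l) y)) < e"
    proof (intro ballI allI impI)
      fix y assume y: "y \<in> space N"
      fix e :: real assume e: "e > 0"
      obtain M0 where M0: "\<And>m k. M0 \<le> m \<Longrightarrow> M0 \<le> k \<Longrightarrow> measure M (Agr m k) * (1 - measure M (Agr m k)) < e / 4"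
        using DI[of "e/4"] e by auto
      have c: "e / (4 * (?r + 1)) > 0" using e by (simp add: add_pos_nonneg)
      obtain K where K: "\<And>m. m \<ge> K \<Longrightarrow> eps m < e / (4 * (?r + 1))" using eps_small[OF c] by blast
      have rK: "?r * eps m \<le> e / 4" if "m \<ge> K" for m
      proof -
        have "?r * eps m \<le> (?r + 1) * (e / (4 * (?r + 1)))"
          using K[OF that] eps_pos[of m] by (intro mult_mono) auto
        also have "\<dots> = e / 4"
        proof -
          have "?r + 1 \<noteq> 0" by (metis add_nonneg_pos of_nat_0_le_iff less_numeral_extra(1) less_irrefl)
          then show ?thesis by (simp add: field_simps)
        qed
        finally show ?thesis .
      qed
      show "\<exists>J. \<forall>j\<ge>J. \<forall>l\<ge>J. measure M (sd (Bp (s j) y) (Bp (s l) y)) < e"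
      proof (intro exI[of _ "max M0 K"] allI impI)
        fix j l assume jl: "max M0 K \<le> j" "max M0 K \<le> l"
        show "measure M (sd (Bp (s j) y) (Bp (s l) y)) < e"
        proof (cases "j = l")
          case True then show ?thesis using e by (simp add: sd_def)
        next
          case False
          let ?a = "measure M (Agr (s j) (s l))"
          have "?a * (1 - ?a) < e / 4" using M0 jl sj by (meson max.boundedE order_trans)
          then have a: "1 - ?a < 2 * (e / 4)" using large[OF False] pM.prob_le_1 by (intro large_prod) auto
          have "measure M (sd (Bp (s j) y) (Bp (s l) y)) \<le> (1 - ?a) + ?r * eps (s j) + ?r * eps (s l)"
            by (rule A4[OF y])
          also have "\<dots> < e"
          proof -
            have "K \<le> s j" "K \<le> s l" using jl sj[of j] sj[of l] by auto
            then show ?thesis using a rK[of "s j"] rK[of "s l"] by linarith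
          qed
          finally show ?thesis .
        qed
      qed
    qed
    then show ?thesis using sm by blast
  qed
qed

lemma limits:
  "\<exists>(s::nat\<Rightarrow>nat) C. strict_mono s \<and> (\<forall>y\<in>space N. C y \<in> sets M \<and>
      (\<forall>e>0. \<exists>J. \<forall>j\<ge>J. measure M (sd (Bp (s j) y) (C y)) < e))"
proof -
  obtain s :: "nat \<Rightarrow> nat" where s: "strict_mono s"
    "\<And>y e. y \<in> space N \<Longrightarrow> e > 0 \<Longrightarrow> \<exists>J. \<forall>j\<ge>J. \<forall>l\<ge>J. measure M (sd (Bp (s j) y) (Bp (s l) y)) < e"
    using cauchy_sub by blast
  have "\<forall>y\<in>space N. \<exists>C. C \<in> sets M \<and> (\<forall>e>0. \<exists>J. \<forall>j\<ge>J. measure M (sd (Bp (s j) y) C) < e)"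
  proof
    fix y assume y: "y \<in> space N"
    have "\<exists>C\<in>sets M. \<forall>e>0. \<exists>J. \<forall>j\<ge>J. measure M (sd (Bp (s j) y) C) < e"
      using Bp_sets[OF y] s(2)[OF y] by (intro pM.cauchy_limit) auto
    then show "\<exists>C. C \<in> sets M \<and> (\<forall>e>0. \<exists>J. \<forall>j\<ge>J. measure M (sd (Bp (s j) y) C) < e)" by blast
  qed
  then obtain C where "\<forall>y\<in>space N. C y \<in> sets M \<and> (\<forall>e>0. \<exists>J. \<forall>j\<ge>J. measure M (sd (Bp (s j) y) (C y)) < e)"
    by metis
  then show ?thesis using s(1) by blast
qed

lemma zero_eps: fixes a :: real assumes "\<And>e. e > 0 \<Longrightarrow> \<bar>a\<bar> < e" shows "a = 0"
  using assms[of "\<bar>a\<bar>"] by (cases "a = 0") auto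

lemma sd_comm: "sd P Q = sd Q P" unfolding sd_def by blast

context
  fixes s :: "nat \<Rightarrow> nat" and C :: "'b \<Rightarrow> 'a set"
  assumes s_sm: "strict_mono s" and C_sets: "\<And>y. y \<in> space N \<Longrightarrow> C y \<in> sets M"
    and C_lim: "\<And>y e. y \<in> space N \<Longrightarrow> e > 0 \<Longrightarrow> \<exists>J. \<forall>j\<ge>J. measure M (sd (Bp (s j) y) (C y)) < e"
begin

lemma ev_eps: "e > 0 \<Longrightarrow> \<exists>J. \<forall>j\<ge>J. eps (s j) < e"
  using eps_small[of e] seq_suble[OF s_sm] order_trans by blast

lemma C1: assumes y: "y \<in> space N" shows "measure M (C y) = measure N {y}"
proof -
  have "\<bar>measure M (C y) - measure N {y}\<bar> < e" if e: "e > 0" for e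
  proof -
    obtain J1 where J1: "\<And>j. j \<ge> J1 \<Longrightarrow> measure M (sd (Bp (s j) y) (C y)) < e / 2"
      using C_lim[OF y, of "e/2"] e by auto
    obtain J2 where J2: "\<And>j. j \<ge> J2 \<Longrightarrow> eps (s j) < e / 2"
      using ev_eps[of "e/2"] e by auto
    let ?j = "max J1 J2"
    have "\<bar>measure M (Bp (s ?j) y) - measure M (C y)\<bar> \<le> measure M (sd (Bp (s ?j) y) (C y))"
      using Bp_sets[OF y] C_sets[OF y] by (rule pM.sd_abs)
    then show ?thesis using J1[of ?j] J2[of ?j] F1[OF y, of "s ?j"] by linarith
  qed
  then show ?thesis using zero_eps[of "measure M (C y) - measure N {y}"] by simp
qed

lemma C2: assumes "y \<in> space N" "z \<in> space N" "y \<noteq> z" shows "measure M (C y \<inter> C z) = 0"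
proof -
  have "\<bar>measure M (C y \<inter> C z)\<bar> < e" if e: "e > 0" for e
  proof -
    obtain J1 where J1: "\<And>j. j \<ge> J1 \<Longrightarrow> measure M (sd (Bp (s j) y) (C y)) < e / 3"
      using C_lim[OF assms(1), of "e/3"] e by auto
    obtain J2 where J2: "\<And>j. j \<ge> J2 \<Longrightarrow> measure M (sd (Bp (s j) z) (C z)) < e / 3"
      using C_lim[OF assms(2), of "e/3"] e by auto
    obtain J3 where J3: "\<And>j. j \<ge> J3 \<Longrightarrow> eps (s j) < e / 3"
      using ev_eps[of "e/3"] e by auto
    let ?j = "max J1 (max J2 J3)"
    have "\<bar>measure M (Bp (s ?j) y \<inter> Bp (s ?j) z) - measure M (C y \<inter> C z)\<bar>
       \<le> measure M (sd (Bp (s ?j) y) (C y)) + measure M (sd (Bp (s ?j) z) (C z))"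
      using Bp_sets assms C_sets by (intro pM.sd_int) auto
    then show ?thesis using J1[of ?j] J2[of ?j] J3[of ?j] F2[OF assms, of "s ?j"] by simp linarith
  qed
  then show ?thesis using zero_eps by blast
qed

lemma C3: assumes y: "y \<in> space N" and gc: "\<gamma> \<in> carrier G"
  shows "measure M (sd (set_act f (C y) \<gamma>) (C (g y \<gamma>))) = 0"
proof -
  have gy: "g y \<gamma> \<in> space N" using actN(1) y gc by blast
  have "\<bar>measure M (sd (set_act f (C y) \<gamma>) (C (g y \<gamma>)))\<bar> < e" if e: "e > 0" for e
  proof -
    obtain J1 where J1: "\<And>j. j \<ge> J1 \<Longrightarrow> measure M (sd (Bp (s j) y) (C y)) < e / 3"
      using C_lim[OF y, of "e/3"] e by auto
    obtain J2 where J2: "\<And>j. j \<ge> J2 \<Longrightarrow> measure M (sd (Bp (s j) (g y \<gamma>)) (C (g y \<gamma>))) < e / 3"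
      using C_lim[OF gy, of "e/3"] e by auto
    obtain J3 where J3: "\<And>j. j \<ge> J3 \<Longrightarrow> eps (s j) < e / 12"
      using ev_eps[of "e/12"] e by auto
    obtain i where i: "\<And>m. m \<ge> i \<Longrightarrow> \<gamma> \<in> FF m" using FF_ev[OF gc] by blast
    let ?j = "max (max J1 J2) (max J3 i)"
    let ?B = "\<lambda>y. Bp (s ?j) y"
    have Fj: "\<gamma> \<in> FF (s ?j)" using i seq_suble[OF s_sm, of ?j] by auto
    have s1: "set_act f (C y) \<gamma> \<in> sets M" "set_act f (?B y) \<gamma> \<in> sets M"
      using sa_sets[OF gc] C_sets[OF y] Bp_sets[OF y] by auto
    have s2: "?B (g y \<gamma>) \<in> sets M" "C (g y \<gamma>) \<in> sets M" using Bp_sets[OF gy] C_sets[OF gy] by auto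
    have "measure M (sd (set_act f (C y) \<gamma>) (C (g y \<gamma>)))
       \<le> measure M (sd (set_act f (C y) \<gamma>) (?B (g y \<gamma>))) + measure M (sd (?B (g y \<gamma>)) (C (g y \<gamma>)))"
      using s1 s2 by (intro pM.sd_tri) auto
    also have "measure M (sd (set_act f (C y) \<gamma>) (?B (g y \<gamma>)))
       \<le> measure M (sd (set_act f (C y) \<gamma>) (set_act f (?B y) \<gamma>)) + measure M (sd (set_act f (?B y) \<gamma>) (?B (g y \<gamma>)))"
      using s1 s2 by (intro pM.sd_tri) auto
    also have "measure M (sd (set_act f (C y) \<gamma>) (set_act f (?B y) \<gamma>)) = measure M (sd (?B y) (C y))"
      using sa_sd[OF gc] sa_meas[OF gc] pM.sd_sets C_sets[OF y] Bp_sets[OF y] sd_comm by metis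
    finally have "measure M (sd (set_act f (C y) \<gamma>) (C (g y \<gamma>)))
       \<le> measure M (sd (?B y) (C y)) + measure M (sd (set_act f (?B y) \<gamma>) (?B (g y \<gamma>))) + measure M (sd (?B (g y \<gamma>)) (C (g y \<gamma>)))"
      by simp
    then show ?thesis using J1[of ?j] J2[of ?j] J3[of ?j] F3[OF y Fj] by simp linarith
  qed
  then show ?thesis using zero_eps by blast
qed

definition KK where "KK y = C y - (\<Union>z\<in>space N - {y}. C z)"

lemma KK_sets: "y \<in> space N \<Longrightarrow> KK y \<in> sets M"
  unfolding KK_def using C_sets finN by (intro sets.Diff sets.finite_UN) auto

lemma KK_disj: "y \<noteq> z \<Longrightarrow> y \<in> space N \<Longrightarrow> z \<in> space N \<Longrightarrow> KK y \<inter> KK z = {}"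
  unfolding KK_def by blast

lemma KK_sub: "KK y \<subseteq> C y" unfolding KK_def by blast

lemma KK_meas: assumes y: "y \<in> space N" shows "measure M (KK y) = measure N {y}"
proof -
  let ?O = "\<Union>z\<in>space N - {y}. C z"
  have Os: "?O \<in> sets M" using C_sets finN by (intro sets.finite_UN) auto
  have "measure M (C y \<inter> ?O) \<le> (\<Sum>z\<in>space N - {y}. measure M (C y \<inter> C z))"
  proof -
    have "C y \<inter> ?O = (\<Union>z\<in>space N - {y}. C y \<inter> C z)" by blast
    then show ?thesis using C_sets finN y by (simp only:) (intro measure_UNION_le, auto)
  qed
  also have "\<dots> = 0" using C2 y by (intro sum.neutral) auto
  finally have "measure M (C y \<inter> ?O) = 0" by (simp add: measure_le_0_iff)
  moreover have "measure M (KK y) = measure M (C y) - measure M (C y \<inter> ?O)"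
    unfolding KK_def using pM.finite_measure_Diff' C_sets[OF y] Os by blast
  ultimately show ?thesis using C1[OF y] by simp
qed

lemma KK_union: "measure M (\<Union>y\<in>space N. KK y) = 1"
proof -
  have "measure M (\<Union>y\<in>space N. KK y) = (\<Sum>y\<in>space N. measure M (KK y))"
    using finN KK_sets KK_disj by (intro measure_finite_Union) (auto simp: disjoint_family_on_def pM.emeasure_finite)
  also have "\<dots> = 1" using KK_meas sumN1 by simp
  finally show ?thesis .
qed

lemma KK_rest: "measure M (UNIV - (\<Union>y\<in>space N. KK y)) = 0"
proof -
  have "(\<Union>y\<in>space N. KK y) \<in> sets M" using KK_sets finN by (intro sets.finite_UN) auto
  then show ?thesis using pM.prob_compl KK_union spM by simp
qed

definition y0 where "y0 = (SOME y. y \<in> space N)"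
definition Phi where "Phi x = (if x \<in> (\<Union>y\<in>space N. KK y) then (THE y. y \<in> space N \<and> x \<in> KK y) else y0)"

lemma y0: "y0 \<in> space N"
  unfolding y0_def using pN.not_empty some_in_eq by blast

lemma Phi_KK: assumes "y \<in> space N" "x \<in> KK y" shows "Phi x = y"
proof -
  have "(THE y. y \<in> space N \<and> x \<in> KK y) = y"
    using assms KK_disj by (intro the_equality) blast+
  then show ?thesis unfolding Phi_def using assms by auto
qed

lemma Phi_in: "Phi x \<in> space N"
proof (cases "x \<in> (\<Union>y\<in>space N. KK y)")
  case True
  then obtain y where "y \<in> space N" "x \<in> KK y" by blast
  then show ?thesis using Phi_KK by simp
next
  case False then show ?thesis unfolding Phi_def using y0 by simp
qed

lemma U_sets: "(\<Union>y\<in>space N. KK y) \<in> sets M"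
  using KK_sets finN by (intro sets.finite_UN) auto

lemma R_sets: "UNIV - (\<Union>y\<in>space N. KK y) \<in> sets M"
  using U_sets by (rule compl_sets)

lemma Phi_pre: assumes y: "y \<in> space N"
  shows "Phi -` {y} = KK y \<union> (if y = y0 then UNIV - (\<Union>y\<in>space N. KK y) else {})"
proof (intro equalityI subsetI)
  fix x assume x: "x \<in> Phi -` {y}"
  show "x \<in> KK y \<union> (if y = y0 then UNIV - (\<Union>y\<in>space N. KK y) else {})"
  proof (cases "x \<in> (\<Union>y\<in>space N. KK y)")
    case True
    then obtain z where "z \<in> space N" "x \<in> KK z" by blast
    then show ?thesis using Phi_KK x by auto
  next
    case False then show ?thesis using x unfolding Phi_def by auto
  qed
next
  fix x assume x: "x \<in> KK y \<union> (if y = y0 then UNIV - (\<Union>y\<in>space N. KK y) else {})"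
  show "x \<in> Phi -` {y}"
  proof (cases "x \<in> KK y")
    case True then show ?thesis using Phi_KK y by simp
  next
    case False
    then have "y = y0" "x \<notin> (\<Union>y\<in>space N. KK y)" using x by (auto split: if_splits)
    then show ?thesis unfolding Phi_def by simp
  qed
qed

lemma Phi_pre_sets: "y \<in> space N \<Longrightarrow> Phi -` {y} \<in> sets M"
  unfolding Phi_pre using KK_sets R_sets by auto

lemma Phi_pre_meas: assumes y: "y \<in> space N" shows "measure M (Phi -` {y}) = measure N {y}"
proof -
  let ?R = "UNIV - (\<Union>y\<in>space N. KK y)"
  have Rs: "?R \<in> sets M" by (rule R_sets)
  show ?thesis
  proof (cases "y = y0")
    case False then show ?thesis unfolding Phi_pre[OF y] using KK_meas[OF y] by simp
  next
    case True
    have "measure M (KK y \<union> ?R) \<le> measure M (KK y) + measure M ?R"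
      using Rs KK_sets[OF y] by (intro measure_Un_le)
    moreover have "measure M (KK y) \<le> measure M (KK y \<union> ?R)"
      using Rs KK_sets[OF y] by (intro pM.finite_measure_mono) auto
    ultimately show ?thesis unfolding Phi_pre[OF y] using True KK_meas[OF y] KK_rest by simp
  qed
qed

lemma Phi_meas: "Phi \<in> measurable M N"
proof -
  have "measurable M N = measurable M (count_space (space N))"
    using sN by (intro measurable_cong_sets) auto
  moreover have "Phi \<in> measurable M (count_space (space N))"
    using finN Phi_in Phi_pre_sets spM by (subst measurable_count_space_eq2) auto
  ultimately show ?thesis by simp
qed

lemma Phi_distr: "distr M N Phi = N"
proof (rule measure_eqI_finite[of _ "space N"])
  show "sets (distr M N Phi) = Pow (space N)" using sN by simp
  show "sets N = Pow (space N)" by (rule sN)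
  show "finite (space N)" by (rule finN)
  fix a assume a: "a \<in> space N"
  have "emeasure (distr M N Phi) {a} = emeasure M (Phi -` {a} \<inter> space M)"
    using Phi_meas a sN by (intro emeasure_distr) auto
  also have "\<dots> = ennreal (measure M (Phi -` {a}))" using spM pM.emeasure_eq_measure by simp
  also have "\<dots> = ennreal (measure N {a})" using Phi_pre_meas[OF a] by simp
  also have "\<dots> = emeasure N {a}" using pN.emeasure_eq_measure by simp
  finally show "emeasure (distr M N Phi) {a} = emeasure N {a}" .
qed

lemma Phi_equiv: assumes gc: "\<gamma> \<in> carrier G"
  shows "AE x in M. Phi (f x \<gamma>) = g (Phi x) \<gamma>"
proof -
  let ?U = "\<Union>y\<in>space N. KK y"
  let ?T = "\<lambda>S. (\<lambda>x. f x \<gamma>) -` S"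
  define Nb where "Nb = (UNIV - ?U) \<union> ?T (UNIV - ?U) \<union>
      (\<Union>y\<in>space N. ?T (sd (set_act f (C y) \<gamma>) (C (g y \<gamma>))))"
  have Us: "UNIV - ?U \<in> sets M" by (rule R_sets)
  have Ss: "y \<in> space N \<Longrightarrow> sd (set_act f (C y) \<gamma>) (C (g y \<gamma>)) \<in> sets M" for y
    using sa_sets[OF gc] C_sets actN(1)[OF _ gc] by (intro pM.sd_sets) auto
  have Nbs: "Nb \<in> sets M" unfolding Nb_def using Us Ss pre_sets[OF gc] finN
    by (intro sets.Un sets.finite_UN) auto
  have "measure M Nb \<le> measure M ((UNIV - ?U) \<union> ?T (UNIV - ?U)) +
        measure M (\<Union>y\<in>space N. ?T (sd (set_act f (C y) \<gamma>) (C (g y \<gamma>))))"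
    unfolding Nb_def using Us Ss pre_sets[OF gc] finN by (intro measure_Un_le sets.Un sets.finite_UN) auto
  also have "measure M ((UNIV - ?U) \<union> ?T (UNIV - ?U)) \<le> measure M (UNIV - ?U) + measure M (?T (UNIV - ?U))"
    using Us pre_sets[OF gc] by (intro measure_Un_le) auto
  also have "measure M (?T (UNIV - ?U)) = 0" using pre_meas[OF gc Us] KK_rest by simp
  also have "measure M (\<Union>y\<in>space N. ?T (sd (set_act f (C y) \<gamma>) (C (g y \<gamma>))))
      \<le> (\<Sum>y\<in>space N. measure M (?T (sd (set_act f (C y) \<gamma>) (C (g y \<gamma>)))))"
    using Ss pre_sets[OF gc] finN by (intro measure_UNION_le) auto
  also have "\<dots> = 0" using pre_meas[OF gc Ss] C3[OF _ gc] by (intro sum.neutral) auto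
  finally have "measure M Nb \<le> 0" using KK_rest by simp
  then have "measure M Nb = 0" by (simp add: measure_le_0_iff)
  then have null: "Nb \<in> null_sets M" using Nbs pM.emeasure_eq_measure by (auto simp: null_sets_def)
  show ?thesis
  proof (rule AE_I'[OF null], rule subsetI)
    fix x assume x: "x \<in> {x \<in> space M. Phi (f x \<gamma>) \<noteq> g (Phi x) \<gamma>}"
    show "x \<in> Nb"
    proof (rule ccontr)
      assume nx: "x \<notin> Nb"
      then obtain y where y: "y \<in> space N" "x \<in> KK y" unfolding Nb_def by blast
      then have Px: "Phi x = y" by (rule Phi_KK)
      have gy: "g y \<gamma> \<in> space N" using actN(1) y gc by blast
      have "f x \<gamma> \<in> set_act f (C y) \<gamma>" unfolding set_act_def using y KK_sub by blast
      moreover have "f x \<gamma> \<notin> sd (set_act f (C y) \<gamma>) (C (g y \<gamma>))" using nx y unfolding Nb_def by blast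
      ultimately have c: "f x \<gamma> \<in> C (g y \<gamma>)" unfolding sd_def by blast
      obtain z where z: "z \<in> space N" "f x \<gamma> \<in> KK z" using nx unfolding Nb_def by blast
      have "z = g y \<gamma>"
      proof (rule ccontr)
        assume "z \<noteq> g y \<gamma>"
        then show False using z c gy unfolding KK_def by blast
      qed
      then have "Phi (f x \<gamma>) = g (Phi x) \<gamma>" using Phi_KK[OF z] Px by simp
      then show False using x by simp
    qed
  qed
qed

lemma factor_main: "is_factor G M f N g"
  unfolding is_factor_def
proof (intro exI[of _ Phi] conjI)
  show "Phi \<in> measurable M N" by (rule Phi_meas)
  show "distr M N Phi = N" by (rule Phi_distr)
  show "AE x in M. \<forall>\<gamma>\<in>carrier G. Phi (f x \<gamma>) = g (Phi x) \<gamma>"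
    using Phi_equiv cnt by (intro AE_ball_countable') auto
qed

end

lemma main_factor: "is_factor G M f N g"
proof -
  obtain s :: "nat \<Rightarrow> nat" and C where sC: "strict_mono s"
    "\<forall>y\<in>space N. C y \<in> sets M \<and> (\<forall>e>0. \<exists>J. \<forall>j\<ge>J. measure M (sd (Bp (s j) y) (C y)) < e)"
    using limits by blast
  show ?thesis
    by (rule factor_main[of s C]) (use sC in auto)
qed

end

theorem theorem1:
  fixes G :: "('g, 'c) monoid_scheme"
    and M :: "'a::polish_space measure" and f :: "'a \<Rightarrow> 'g \<Rightarrow> 'a"
    and N :: "'b measure" and g :: "'b \<Rightarrow> 'g \<Rightarrow> 'b"
  assumes "group G" and "countable (carrier G)"
    and "prob_space M" and "sets M = sets borel"
    and "mp_action G M f" and "strongly_ergodic G M f"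
    and "prob_space N" and "finite (space N)" and "sets N = Pow (space N)"
    and "\<forall>y\<in>space N. measure N {y} > 0"
    and "mp_action G N g"
    and "weakly_contains G M f N g"
  shows "is_factor G M f N g"
proof -
  interpret W: wc_setup G M f N g by (rule wc_setup.intro[OF assms])
  show ?thesis by (rule W.main_factor)
qed

end
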